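(* Let $(M_I,\triangleright)$ be a prefactor system and let $i\le i'\le i''$ be indices in $I$. (1) If $M_I$ is direct (with embeddings $emb$), then for all $a_i\in M_i$ and $a_{i''}\in M_{i''}$: $a_{i''}\triangleright a_i$ implies $a_{i''}\triangleright emb_{i,i'}(a_i)$. (2) If $M_I$ is inverse (with projections $proj$), then for all $a_{i'}\in M_{i'}$ and $a_{i''}\in M_{i''}$: $a_{i''}\triangleright a_{i'}$ implies $a_{i''}\triangleright proj_{i',i}(a_{i'})$.
   Context: Let $(I,\le)$ be a non-empty directed preordered set (reflexive, transitive, every finite subset has an upper bound). A system $(M_I,\triangleright)$ consists of sets $M_i$ ($i\in I$, regarded as pairwise disjoint) and, for each $i\le i'$, a relation $\triangleright\subseteq M_{i'}\times M_i$ (written $a_{i'}\triangleright a_i$) which is reflexive when $i=i'$. Elements $a_i\in M_i$, $b_j\in M_j$ are consistent, written $a_i\approx b_j$, iff there are $i'\ge i,j$ and $c\in M_{i'}$ with $c\triangleright a_i$ and $c\triangleright b_j$. A prefactor system is a system such that $a_{i'}\approx a_i\iff a_{i'}\triangleright a_i$ for all $i\le i'$, $a_i\in M_i$, $a_{i'}\in M_{i'}$. A family of $\approx$-embeddings consists of maps $emb_{i,i'}:M_i\to M_{i'}$ ($i\le i'$) preserving $\approx$ (i.e. $a\approx b\Rightarrow emb_{i,i'}(a)\approx emb_{i,i'}(b)$) with $emb_{i,i}(a)\approx a$ and $emb_{i',i''}(emb_{i,i'}(a))\approx emb_{i,i''}(a)$. It is coherent if for all $i\le i'\le i''$: $a_{i'}\triangleright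 a_i\Rightarrow emb_{i',i''}(a_{i'})\triangleright a_i$. A family of $\approx$-projections consists of $\approx$-preserving maps $proj_{i',i}:M_{i'}\to M_i$ ($i\le i'$) with $proj_{i,i}(a)\approx a$ and $proj_{i',i}(proj_{i'',i'}(a))\approx proj_{i'',i}(a)$; it is coherent if for all $i\le i'\le i''$: $a_{i''}\triangleright a_i\Rightarrow proj_{i'',i'}(a_{i''})\triangleright a_i$. A prefactor system is direct iff it has coherent $\approx$-embeddings with $a_{i'}\triangleright a_i\iff a_{i'}\approx emb_{i,i'}(a_i)$ for all $i\le i'$; it is inverse iff it has coherent $\approx$-projections with $a_{i'}\triangleright a_i\iff proj_{i',i}(a_{i'})\approx a_i$ for all $i\le i'$. *)

theory Defs
  imports Main
begin

text \<open>The sets M_i are given by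
  M :: 'i => 'a set; pairwise disjointness is realised by always carrying the index
  along with an element.  R i' a' i a  means  a' (in M_i') |> a (in M_i).\<close>

definition directed_preorder :: "'i set \<Rightarrow> ('i \<Rightarrow> 'i \<Rightarrow> bool) \<Rightarrow> bool" where
  "directed_preorder I le \<longleftrightarrow>
     I \<noteq> {} \<and>
     (\<forall>i\<in>I. le i i) \<and>
     (\<forall>i\<in>I. \<forall>j\<in>I. \<forall>k\<in>I. le i j \<longrightarrow> le j k \<longrightarrow> le i k) \<and>
     (\<forall>F. finite F \<longrightarrow> F \<subseteq> I \<longrightarrow> (\<exists>u\<in>I. \<forall>f\<in>F. le f u))"

definition is_system ::
  "'i set \<Rightarrow> ('i \<Rightarrow> 'i \<Rightarrow> bool) \<Rightarrow> ('i \<Rightarrow> 'a set) \<Rightarrow> ('i \<Rightarrow> 'a \<Rightarrow> 'i \<Rightarrow> 'a \<Rightarrow> bool) \<Rightarrow> bool" where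
  "is_system I le M R \<longleftrightarrow> directed_preorder I le \<and> (\<forall>i\<in>I. \<forall>a\<in>M i. R i a i a)"

definition consistent ::
  "'i set \<Rightarrow> ('i \<Rightarrow> 'i \<Rightarrow> bool) \<Rightarrow> ('i \<Rightarrow> 'a set) \<Rightarrow> ('i \<Rightarrow> 'a \<Rightarrow> 'i \<Rightarrow> 'a \<Rightarrow> bool)
    \<Rightarrow> 'i \<Rightarrow> 'a \<Rightarrow> 'i \<Rightarrow> 'a \<Rightarrow> bool" where
  "consistent I le M R i a j b \<longleftrightarrow>
     (\<exists>k\<in>I. le i k \<and> le j k \<and> (\<exists>c\<in>M k. R k c i a \<and> R k c j b))"

definition prefactor_system ::
  "'i set \<Rightarrow> ('i \<Rightarrow> 'i \<Rightarrow> bool) \<Rightarrow> ('i \<Rightarrow> 'a set) \<Rightarrow> ('i \<Rightarrow> 'a \<Rightarrow> 'i \<Rightarrow> 'a \<Rightarrow> bool) \<Rightarrow> bool" where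
  "prefactor_system I le M R \<longleftrightarrow> is_system I le M R \<and>
     (\<forall>i\<in>I. \<forall>i'\<in>I. le i i' \<longrightarrow> (\<forall>a\<in>M i. \<forall>a'\<in>M i'.
        consistent I le M R i' a' i a \<longleftrightarrow> R i' a' i a))"

definition coherent_embeddings ::
  "'i set \<Rightarrow> ('i \<Rightarrow> 'i \<Rightarrow> bool) \<Rightarrow> ('i \<Rightarrow> 'a set) \<Rightarrow> ('i \<Rightarrow> 'a \<Rightarrow> 'i \<Rightarrow> 'a \<Rightarrow> bool)
    \<Rightarrow> ('i \<Rightarrow> 'i \<Rightarrow> 'a \<Rightarrow> 'a) \<Rightarrow> bool" where
  "coherent_embeddings I le M R emb \<longleftrightarrow>
     (\<forall>i\<in>I. \<forall>i'\<in>I. le i i' \<longrightarrow> (\<forall>a\<in>M i. emb i i' a \<in> M i')) \<and>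
     (\<forall>i\<in>I. \<forall>i'\<in>I. le i i' \<longrightarrow> (\<forall>a\<in>M i. \<forall>b\<in>M i.
        consistent I le M R i a i b \<longrightarrow> consistent I le M R i' (emb i i' a) i' (emb i i' b))) \<and>
     (\<forall>i\<in>I. \<forall>a\<in>M i. consistent I le M R i (emb i i a) i a) \<and>
     (\<forall>i\<in>I. \<forall>i'\<in>I. \<forall>i''\<in>I. le i i' \<longrightarrow> le i' i'' \<longrightarrow> (\<forall>a\<in>M i.
        consistent I le M R i'' (emb i' i'' (emb i i' a)) i'' (emb i i'' a))) \<and>
     (\<forall>i\<in>I. \<forall>i'\<in>I. \<forall>i''\<in>I. le i i' \<longrightarrow> le i' i'' \<longrightarrow> (\<forall>a\<in>M i. \<forall>a'\<in>M i'.
        R i' a' i a \<longrightarrow> R i'' (emb i' i'' a') i a))"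

definition coherent_projections ::
  "'i set \<Rightarrow> ('i \<Rightarrow> 'i \<Rightarrow> bool) \<Rightarrow> ('i \<Rightarrow> 'a set) \<Rightarrow> ('i \<Rightarrow> 'a \<Rightarrow> 'i \<Rightarrow> 'a \<Rightarrow> bool)
    \<Rightarrow> ('i \<Rightarrow> 'i \<Rightarrow> 'a \<Rightarrow> 'a) \<Rightarrow> bool" where
  "coherent_projections I le M R proj \<longleftrightarrow>
     (\<forall>i\<in>I. \<forall>i'\<in>I. le i i' \<longrightarrow> (\<forall>a\<in>M i'. proj i' i a \<in> M i)) \<and>
     (\<forall>i\<in>I. \<forall>i'\<in>I. le i i' \<longrightarrow> (\<forall>a\<in>M i'. \<forall>b\<in>M i'.
        consistent I le M R i' a i' b \<longrightarrow> consistent I le M R i (proj i' i a) i (proj i' i b))) \<and>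
     (\<forall>i\<in>I. \<forall>a\<in>M i. consistent I le M R i (proj i i a) i a) \<and>
     (\<forall>i\<in>I. \<forall>i'\<in>I. \<forall>i''\<in>I. le i i' \<longrightarrow> le i' i'' \<longrightarrow> (\<forall>a\<in>M i''.
        consistent I le M R i (proj i' i (proj i'' i' a)) i (proj i'' i a))) \<and>
     (\<forall>i\<in>I. \<forall>i'\<in>I. \<forall>i''\<in>I. le i i' \<longrightarrow> le i' i'' \<longrightarrow> (\<forall>a\<in>M i. \<forall>a''\<in>M i''.
        R i'' a'' i a \<longrightarrow> R i' (proj i'' i' a'') i a))"

definition direct_system ::
  "'i set \<Rightarrow> ('i \<Rightarrow> 'i \<Rightarrow> bool) \<Rightarrow> ('i \<Rightarrow> 'a set) \<Rightarrow> ('i \<Rightarrow> 'a \<Rightarrow> 'i \<Rightarrow> 'a \<Rightarrow> bool)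
    \<Rightarrow> ('i \<Rightarrow> 'i \<Rightarrow> 'a \<Rightarrow> 'a) \<Rightarrow> bool" where
  "direct_system I le M R emb \<longleftrightarrow> prefactor_system I le M R \<and> coherent_embeddings I le M R emb \<and>
     (\<forall>i\<in>I. \<forall>i'\<in>I. le i i' \<longrightarrow> (\<forall>a\<in>M i. \<forall>a'\<in>M i'.
        R i' a' i a \<longleftrightarrow> consistent I le M R i' a' i' (emb i i' a)))"

definition inverse_system ::
  "'i set \<Rightarrow> ('i \<Rightarrow> 'i \<Rightarrow> bool) \<Rightarrow> ('i \<Rightarrow> 'a set) \<Rightarrow> ('i \<Rightarrow> 'a \<Rightarrow> 'i \<Rightarrow> 'a \<Rightarrow> bool)
    \<Rightarrow> ('i \<Rightarrow> 'i \<Rightarrow> 'a \<Rightarrow> 'a) \<Rightarrow> bool" where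
  "inverse_system I le M R proj \<longleftrightarrow> prefactor_system I le M R \<and> coherent_projections I le M R proj \<and>
     (\<forall>i\<in>I. \<forall>i'\<in>I. le i i' \<longrightarrow> (\<forall>a\<in>M i. \<forall>a'\<in>M i'.
        R i' a' i a \<longleftrightarrow> consistent I le M R i (proj i' i a') i a))"

end

theory Submission
  imports Defs
begin

lemma pf_eq:
  assumes "prefactor_system I le M R" "j \<in> I" "x \<in> M j" "y \<in> M j"
  shows "R j x j y \<longleftrightarrow> consistent I le M R j x j y"
proof -
  have le: "le j j" using assms(1,2) unfolding prefactor_system_def is_system_def directed_preorder_def
    by (elim conjE) (erule bspec)
  have H: "\<forall>i\<in>I. \<forall>i'\<in>I. le i i' \<longrightarrow> (\<forall>a\<in>M i. \<forall>a'\<in>M i'.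
        consistent I le M R i' a' i a \<longleftrightarrow> R i' a' i a)"
    using assms(1) unfolding prefactor_system_def by (elim conjE)
  have "consistent I le M R j x j y \<longleftrightarrow> R j x j y"
    using H assms(2,3,4) le by simp
  thus ?thesis by simp
qed

lemma pf_refl:
  assumes "prefactor_system I le M R" "j \<in> I" "x \<in> M j"
  shows "R j x j x"
  using assms unfolding prefactor_system_def is_system_def by (simp)

lemma pf_sym:
  assumes "prefactor_system I le M R" "j \<in> I" "x \<in> M j" "y \<in> M j" "R j x j y"
  shows "R j y j x"
  using pf_eq[OF assms(1,2,3,4)] pf_eq[OF assms(1,2,4,3)] assms(5) unfolding consistent_def by blast

lemma pf_trans:
  assumes P: "prefactor_system I le M R" and j: "j \<in> I" and xyz: "x \<in> M j" "y \<in> M j" "z \<in> M j"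
    and "R j x j y" "R j y j z"
  shows "R j x j z"
proof -
  have le: "le j j" using P j unfolding prefactor_system_def is_system_def directed_preorder_def
    by (elim conjE) (erule bspec)
  have "R j y j x" using pf_sym[OF P j xyz(1,2)] assms(6) .
  hence "consistent I le M R j x j z" unfolding consistent_def using j le xyz(2) assms(7) by blast
  thus ?thesis using pf_eq[OF P j xyz(1,3)] by blast
qed

theorem lemma2p5:
  fixes I :: "'i set" and le :: "'i \<Rightarrow> 'i \<Rightarrow> bool" and M :: "'i \<Rightarrow> 'a set"
    and R :: "'i \<Rightarrow> 'a \<Rightarrow> 'i \<Rightarrow> 'a \<Rightarrow> bool"
    and emb proj :: "'i \<Rightarrow> 'i \<Rightarrow> 'a \<Rightarrow> 'a"
  assumes "prefactor_system I le M R"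
    and "i \<in> I" and "i' \<in> I" and "i'' \<in> I" and "le i i'" and "le i' i''"
  shows "(direct_system I le M R emb \<longrightarrow>
            (\<forall>a\<in>M i. \<forall>a''\<in>M i''. R i'' a'' i a \<longrightarrow> R i'' a'' i' (emb i i' a)))
       \<and> (inverse_system I le M R proj \<longrightarrow>
            (\<forall>a'\<in>M i'. \<forall>a''\<in>M i''. R i'' a'' i' a' \<longrightarrow> R i'' a'' i (proj i' i a')))"
proof -
  note P = assms(1)
  have TR: "\<forall>i\<in>I. \<forall>j\<in>I. \<forall>k\<in>I. le i j \<longrightarrow> le j k \<longrightarrow> le i k"
    using P unfolding prefactor_system_def is_system_def directed_preorder_def by (elim conjE)
  have tr: "le i i''" using TR assms(2-6) by blast
  have consR: "\<And>j x y. j \<in> I \<Longrightarrow> x \<in> M j \<Longrightarrow> y \<in> M j \<Longrightarrow> consistent I le M R j x j y \<Longrightarrow> R j x j y"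
    using pf_eq[OF P] by blast
  show ?thesis
  proof (intro conjI impI ballI)
    fix a a'' assume D: "direct_system I le M R emb" and a: "a \<in> M i" and a'': "a'' \<in> M i''"
      and r: "R i'' a'' i a"
    have C: "coherent_embeddings I le M R emb" using D unfolding direct_system_def by blast
    have dir: "\<And>j j' x x'. j \<in> I \<Longrightarrow> j' \<in> I \<Longrightarrow> le j j' \<Longrightarrow> x \<in> M j \<Longrightarrow> x' \<in> M j' \<Longrightarrow>
        R j' x' j x \<longleftrightarrow> consistent I le M R j' x' j' (emb j j' x)"
      using D unfolding direct_system_def by blast
    have cl: "\<And>j j' x. j \<in> I \<Longrightarrow> j' \<in> I \<Longrightarrow> le j j' \<Longrightarrow> x \<in> M j \<Longrightarrow> emb j j' x \<in> M j'"
      using C unfolding coherent_embeddings_def by blast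
    have comp: "consistent I le M R i'' (emb i' i'' (emb i i' a)) i'' (emb i i'' a)"
      using C assms(2-6) a unfolding coherent_embeddings_def by meson
    define e where "e = emb i i' a"
    have e: "e \<in> M i'" unfolding e_def by (rule cl[OF assms(2,3,5) a])
    have f: "emb i' i'' e \<in> M i''" by (rule cl[OF assms(3,4,6) e])
    have g: "emb i i'' a \<in> M i''" by (rule cl[OF assms(2,4) tr a])
    have 1: "R i'' a'' i'' (emb i i'' a)" using consR[OF assms(4) a'' g] dir[OF assms(2,4) tr a a''] r by blast
    have 2: "R i'' (emb i' i'' e) i'' (emb i i'' a)" using consR[OF assms(4) f g] comp unfolding e_def by blast
    have 3: "R i'' a'' i'' (emb i' i'' e)"
      using pf_trans[OF P assms(4) a'' g f 1] pf_sym[OF P assms(4) f g 2] by blast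
    show "R i'' a'' i' (emb i i' a)"
      using dir[OF assms(3,4,6) e a''] 3 e_def pf_eq[OF P assms(4) a'' f] by blast
  next
    fix a' a'' assume V: "inverse_system I le M R proj" and a': "a' \<in> M i'" and a'': "a'' \<in> M i''"
      and r: "R i'' a'' i' a'"
    have C: "coherent_projections I le M R proj" using V unfolding inverse_system_def by blast
    have inv: "\<And>j j' x x'. j \<in> I \<Longrightarrow> j' \<in> I \<Longrightarrow> le j j' \<Longrightarrow> x \<in> M j \<Longrightarrow> x' \<in> M j' \<Longrightarrow>
        R j' x' j x \<longleftrightarrow> consistent I le M R j (proj j' j x') j x"
      using V unfolding inverse_system_def by blast
    have cl: "\<And>j j' x. j \<in> I \<Longrightarrow> j' \<in> I \<Longrightarrow> le j j' \<Longrightarrow> x \<in> M j' \<Longrightarrow> proj j' j x \<in> M j"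
      using C unfolding coherent_projections_def by blast
    have pres: "\<And>j j' x y. j \<in> I \<Longrightarrow> j' \<in> I \<Longrightarrow> le j j' \<Longrightarrow> x \<in> M j' \<Longrightarrow> y \<in> M j' \<Longrightarrow>
        consistent I le M R j' x j' y \<Longrightarrow> consistent I le M R j (proj j' j x) j (proj j' j y)"
      using C unfolding coherent_projections_def by blast
    have comp: "consistent I le M R i (proj i' i (proj i'' i' a'')) i (proj i'' i a'')"
      using C assms(2-6) a'' unfolding coherent_projections_def by meson
    define q where "q = proj i'' i' a''"
    have q: "q \<in> M i'" unfolding q_def by (rule cl[OF assms(3,4,6) a''])
    have pq: "proj i' i q \<in> M i" by (rule cl[OF assms(2,3,5) q])
    have pa: "proj i' i a' \<in> M i" by (rule cl[OF assms(2,3,5) a'])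
    have pa'': "proj i'' i a'' \<in> M i" by (rule cl[OF assms(2,4) tr a''])
    have 1: "consistent I le M R i' q i' a'" using inv[OF assms(3,4,6) a' a''] r unfolding q_def by blast
    have 2: "R i (proj i' i q) i (proj i' i a')" using consR[OF assms(2) pq pa] pres[OF assms(2,3,5) q a' 1] by blast
    have 3: "R i (proj i' i q) i (proj i'' i a'')" using consR[OF assms(2) pq pa''] comp unfolding q_def by blast
    have 4: "R i (proj i'' i a'') i (proj i' i a')"
      using pf_trans[OF P assms(2) pa'' pq pa] pf_sym[OF P assms(2) pq pa'' 3] 2 by blast
    show "R i'' a'' i (proj i' i a')"
      using inv[OF assms(2,4) tr pa a''] 4 pf_eq[OF P assms(2) pa'' pa] by blast
  qed
qed

end
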